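(* Let $d\ge2$ be an integer, $\beta>0$, and let $v\in C^1((0,+\infty),\mathbb{R})$ satisfy \[ \limsup_{r\to0}v'(r)<+\infty\quad\text{and}\quad\frac{v'(r)}{r}\xrightarrow[r\to+\infty]{}+\infty. \] Set $v_*(r)=v(r)-\frac{d-1}{\beta}\ln r$, $\pi_*(dr)=Z_*^{-1}e^{-\beta v_*(r)}dr$ on $(0,+\infty)$ and $r_*=\int_0^\infty r\,\pi_*(dr)$. Then the equation \[ \beta^{-1}\varphi'(r) = r_* - r + v_*'(r)\varphi(r),\qquad r>0, \] admits a unique solution $\varphi\in\mathrm{L}^2(\pi_* )$ whose primitives belong to $\mathrm{L}^2(\pi_* )$. Moreover this solution extends continuously to $[0,+\infty)$ with $\varphi(0)=0$, and $\varphi(r)\to0$ as $r\to+\infty$. *)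

theory Defs
  imports "HOL-Analysis.Analysis" "HOL-Probability.Probability"
begin

definition vstar :: "real \<Rightarrow> nat \<Rightarrow> (real \<Rightarrow> real) \<Rightarrow> real \<Rightarrow> real" where
  "vstar \<beta> d v r = v r - (real d - 1) / \<beta> * ln r"

definition Zstar :: "real \<Rightarrow> nat \<Rightarrow> (real \<Rightarrow> real) \<Rightarrow> real" where
  "Zstar \<beta> d v = (LINT r:{0<..}|lborel. exp (- \<beta> * vstar \<beta> d v r))"

definition pistar :: "real \<Rightarrow> nat \<Rightarrow> (real \<Rightarrow> real) \<Rightarrow> real measure" where
  "pistar \<beta> d v = density lborel
     (\<lambda>r. ennreal (indicator {0<..} r * exp (- \<beta> * vstar \<beta> d v r) / Zstar \<beta> d v))"

definition rstar :: "real \<Rightarrow> nat \<Rightarrow> (real \<Rightarrow> real) \<Rightarrow> real" where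
  "rstar \<beta> d v = integral\<^sup>L (pistar \<beta> d v) (\<lambda>r. r)"

definition L2pistar :: "real \<Rightarrow> nat \<Rightarrow> (real \<Rightarrow> real) \<Rightarrow> (real \<Rightarrow> real) \<Rightarrow> bool" where
  "L2pistar \<beta> d v f \<longleftrightarrow> set_integrable (pistar \<beta> d v) {0<..} (\<lambda>r. (f r)\<^sup>2)"

text \<open>Classical solution on (0,inf) of beta^{-1} phi' = r_* - r + v_*' phi, with v_*'(r) = v'(r) - (d-1)/(beta r)\<close>
definition is_solution :: "real \<Rightarrow> nat \<Rightarrow> (real \<Rightarrow> real) \<Rightarrow> (real \<Rightarrow> real) \<Rightarrow> (real \<Rightarrow> real) \<Rightarrow> bool" where
  "is_solution \<beta> d v v' \<phi> \<longleftrightarrow>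
     (\<forall>r>0. \<phi> differentiable (at r) \<and>
        deriv \<phi> r / \<beta> = rstar \<beta> d v - r + (v' r - (real d - 1) / (\<beta> * r)) * \<phi> r)"

end

theory Submission
  imports Defs
begin



locale PC =
  fixes d :: nat and \<beta> :: real and v v' :: "real \<Rightarrow> real"
  assumes d2: "d \<ge> 2" and bpos: "\<beta> > 0"
    and vder: "\<And>r. r > 0 \<Longrightarrow> (v has_real_derivative v' r) (at r)"
    and v'cont: "continuous_on {0<..} v'"
    and lims: "Limsup (at_right 0) (\<lambda>r. ereal (v' r)) < \<infinity>"
    and limt: "filterlim (\<lambda>r. v' r / r) at_top at_top"
begin

definition g :: "real \<Rightarrow> real" where "g r = exp (- \<beta> * vstar \<beta> d v r)"
definition vs' :: "real \<Rightarrow> real" where "vs' r = v' r - (real d - 1) / (\<beta> * r)"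

lemma g_pos: "g r > 0" by (simp add: g_def)

lemma vstar_deriv: "r > 0 \<Longrightarrow> (vstar \<beta> d v has_real_derivative vs' r) (at r)"
proof -
  assume r: "r > 0"
  have D: "((\<lambda>r. v r - (real d - 1) / \<beta> * ln r) has_real_derivative v' r - (real d - 1) / \<beta> * inverse r) (at r)"
    by (intro DERIV_diff DERIV_cmult vder DERIV_ln r)
  have E: "v' r - (real d - 1) / \<beta> * inverse r = vs' r" using r bpos
    by (simp add: vs'_def field_simps)
  have V: "vstar \<beta> d v = (\<lambda>r. v r - (real d - 1) / \<beta> * ln r)"
    by (rule ext) (simp add: vstar_def)
  show ?thesis using D E V by metis
qed

lemma g_deriv: "r > 0 \<Longrightarrow> (g has_real_derivative (- \<beta> * vs' r * g r)) (at r)"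
proof -
  assume r: "r > 0"
  have "((\<lambda>r. exp (- \<beta> * vstar \<beta> d v r)) has_real_derivative (- \<beta> * vs' r * exp (- \<beta> * vstar \<beta> d v r))) (at r)"
    using DERIV_fun_exp[OF DERIV_cmult[OF vstar_deriv[OF r], of "- \<beta>"]] by (simp add: algebra_simps)
  then show ?thesis unfolding g_def[abs_def] by simp
qed

lemma g_cont: "continuous_on {0<..} g"
  by (intro continuous_at_imp_continuous_on ballI DERIV_isCont[OF g_deriv]) auto

lemma vs'_cont: "continuous_on {0<..} vs'"
  unfolding vs'_def[abs_def] using bpos
  by (intro continuous_intros v'cont) auto

lemma near0: "\<exists>\<delta> E. 0 < \<delta> \<and> \<delta> \<le> 1 \<and> E \<ge> 1 \<and> (\<forall>s r. 0 < s \<longrightarrow> s \<le> r \<longrightarrow> r < \<delta> \<longrightarrow> g s \<le> s / r * E * g r)"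
proof -
  obtain c :: real where c: "Limsup (at_right 0) (\<lambda>r. ereal (v' r)) < ereal c"
  proof (cases "Limsup (at_right 0) (\<lambda>r. ereal (v' r))")
    case (real r) then show ?thesis using that[of "r+1"] by simp
  qed (use lims in auto)
  have "eventually (\<lambda>r. ereal (v' r) < ereal c) (at_right (0::real))"
    by (rule Limsup_lessD[OF c])
  then obtain b where b: "b > 0" "\<And>y. y > 0 \<Longrightarrow> y < b \<Longrightarrow> v' y < c"
    unfolding eventually_at_right[OF zero_less_one] by auto
  define \<delta> where "\<delta> = min b 1"
  define M where "M = max c 0"
  define E where "E = exp (\<beta> * M)"
  have E1: "E \<ge> 1" unfolding E_def M_def using bpos by simp
  have key: "g s \<le> s / r * E * g r" if s: "0 < s" "s \<le> r" "r < \<delta>" for s r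
  proof -
    have vd: "v r - v s \<le> M * (r - s)"
    proof (cases "s = r")
      case False
      then have sr: "s < r" using s by auto
      obtain z where z: "s < z" "z < r" "v r - v s = (r - s) * v' z"
        using MVT2[OF sr, of v v'] vder s by force
      have "v' z < c" using b z s unfolding \<delta>_def by auto
      then show ?thesis
      proof -
        have "(r - s) * v' z \<le> (r - s) * M" using \<open>v' z < c\<close> sr unfolding M_def
          by (intro mult_left_mono) auto
        then show ?thesis using z(3) by (simp add: mult.commute)
      qed
    qed simp
    have "\<beta> * (v r - v s) \<le> \<beta> * M"
    proof -
      have "\<beta> * (v r - v s) \<le> \<beta> * (M * (r - s))" using vd bpos by simp
      also have "\<dots> \<le> \<beta> * M" using bpos s unfolding M_def \<delta>_def
        by (intro mult_left_mono) (auto intro!: mult_left_le)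
      finally show ?thesis .
    qed
    moreover have "(real d - 1) * (ln s - ln r) \<le> ln s - ln r"
    proof -
      have "ln s - ln r \<le> 0" using s by simp
      moreover have "real d - 1 \<ge> 1" using d2 by simp
      ultimately have "(real d - 1 - 1) * (ln s - ln r) \<le> 0"
        by (intro mult_nonneg_nonpos) auto
      then show ?thesis by (simp add: algebra_simps)
    qed
    ultimately have "\<beta> * (v r - v s) + (real d - 1) * (ln s - ln r) \<le> \<beta> * M + (ln s - ln r)"
      by linarith
    then have "exp (\<beta> * (v r - v s) + (real d - 1) * (ln s - ln r)) \<le> exp (\<beta> * M + (ln s - ln r))"
      by simp
    also have "\<dots> = E * (s / r)" using s by (simp add: E_def exp_add exp_diff)
    finally have *: "exp (\<beta> * (v r - v s) + (real d - 1) * (ln s - ln r)) \<le> E * (s / r)" .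
    have gg: "- \<beta> * vstar \<beta> d v x = - \<beta> * v x + (real d - 1) * ln x" for x
      using bpos by (simp add: vstar_def field_simps)
    have "g s = g r * exp (\<beta> * (v r - v s) + (real d - 1) * (ln s - ln r))"
      unfolding g_def gg by (simp add: exp_add[symmetric] algebra_simps)
    also have "\<dots> \<le> g r * (E * (s / r))" using mult_left_mono[OF * less_imp_le[OF g_pos]] .
    finally show ?thesis by (simp add: mult_ac)
  qed
  show ?thesis
    by (rule exI[of _ \<delta>], rule exI[of _ E]) (use b E1 key in \<open>auto simp: \<delta>_def\<close>)
qed

end

context PC begin

lemma atinf: "K > 0 \<Longrightarrow> \<exists>R\<ge>1. \<forall>r s. R \<le> r \<longrightarrow> r \<le> s \<longrightarrow> g s \<le> g r * exp (- \<beta> * K * r * (s - r))"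
proof -
  assume K: "K > 0"
  define c where "c = (real d - 1) / \<beta>"
  have c0: "c \<ge> 0" unfolding c_def using bpos d2 by simp
  have "eventually (\<lambda>x. K + c \<le> v' x / x) at_top"
    using limt unfolding filterlim_at_top by blast
  then obtain N where N: "\<And>x. x \<ge> N \<Longrightarrow> K + c \<le> v' x / x"
    unfolding eventually_at_top_linorder by blast
  define R where "R = max N 1"
  have vs: "vs' t \<ge> K * t" if t: "t \<ge> R" for t
  proof -
    have t1: "t \<ge> 1" "t \<ge> N" using t unfolding R_def by auto
    have "(K + c) * t \<le> v' t" using N[OF t1(2)] t1 by (simp add: pos_le_divide_eq)
    moreover have "c / t \<le> c * t"
    proof -
      have "1 * 1 \<le> t * t" using t1 by (intro mult_mono) auto
      then have "c * 1 \<le> c * (t * t)" using c0 by (intro mult_left_mono) auto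
      then show ?thesis using t1 by (simp add: pos_divide_le_eq mult_ac)
    qed
    moreover have "vs' t = v' t - c / t" unfolding vs'_def c_def using t1 by simp
    ultimately show ?thesis by (simp add: algebra_simps)
  qed
  have key: "g s \<le> g r * exp (- \<beta> * K * r * (s - r))" if rs: "R \<le> r" "r \<le> s" for r s
  proof -
    have r1: "r \<ge> 1" using rs unfolding R_def by auto
    have "vstar \<beta> d v s - vstar \<beta> d v r \<ge> K * r * (s - r)"
    proof (cases "r = s")
      case False
      then have lt: "r < s" using rs by auto
      obtain z where z: "r < z" "z < s" "vstar \<beta> d v s - vstar \<beta> d v r = (s - r) * vs' z"
        using MVT2[OF lt, of "vstar \<beta> d v" vs'] vstar_deriv r1 by force
      have "K * r \<le> K * z" using z K by (intro mult_left_mono) auto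
      then have "K * r \<le> vs' z" using vs[of z] z rs by linarith
      then have "(s - r) * (K * r) \<le> (s - r) * vs' z" using lt by (intro mult_left_mono) auto
      then show ?thesis using z(3) by (simp add: mult_ac)
    qed simp
    then have "\<beta> * (K * r * (s - r)) \<le> \<beta> * (vstar \<beta> d v s - vstar \<beta> d v r)"
      using bpos by (intro mult_left_mono) auto
    then have "- \<beta> * vstar \<beta> d v s \<le> - \<beta> * vstar \<beta> d v r + (- \<beta> * K * r * (s - r))"
      by (simp add: algebra_simps)
    then have "g s \<le> exp (- \<beta> * vstar \<beta> d v r + (- \<beta> * K * r * (s - r)))"
      unfolding g_def by simp
    then show ?thesis unfolding g_def exp_add .
  qed
  show ?thesis using key R_def by (intro exI[of _ R]) auto
qed

end


lemma bound_int:
  fixes f G :: "real \<Rightarrow> real"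
  assumes "continuous_on S f" "S \<in> sets lebesgue" "G integrable_on S" "\<And>x. x \<in> S \<Longrightarrow> \<bar>f x\<bar> \<le> G x"
  shows "f integrable_on S" "f absolutely_integrable_on S"
proof -
  have m: "f \<in> borel_measurable (lebesgue_on S)"
    by (rule continuous_imp_measurable_on_sets_lebesgue) (use assms in auto)
  show "f integrable_on S"
    by (rule measurable_bounded_by_integrable_imp_integrable[OF m assms(3)]) (use assms in auto)
  show "f absolutely_integrable_on S"
    by (rule measurable_bounded_by_integrable_imp_absolutely_integrable[OF m assms(2,3)]) (use assms in auto)
qed

lemma const_Ioc: "a \<le> b \<Longrightarrow> ((\<lambda>_. c::real) has_integral (b - a) * c) {a<..b}"
proof -
  assume ab: "a \<le> b"
  have A: "((\<lambda>_. c::real) has_integral (b - a) * c) {a..b}" using has_integral_const_real[of c a b] ab by simp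
  have N1: "negligible {x \<in> {a<..b} - {a..b}. c \<noteq> 0}"
    by (rule negligible_subset[of "{}"]) auto
  have N2: "negligible {x \<in> {a..b} - {a<..b}. c \<noteq> 0}"
    by (rule negligible_subset[of "{a}"]) auto
  show ?thesis using has_integral_spike_set_eq[OF N1 N2] A by blast
qed

lemma sq_bound: fixes R t :: real assumes "R \<ge> 1" "t \<ge> 0"
  shows "1 + (R + t)\<^sup>2 \<le> 4 * (1 + R\<^sup>2) * exp t"
proof -
  have "1 + t / 2 \<le> exp (t / 2)" by (rule exp_ge_add_one_self)
  then have "(1 + t / 2)\<^sup>2 \<le> (exp (t / 2))\<^sup>2" using assms by (intro power_mono) auto
  also have "\<dots> = exp t" by (simp add: power2_eq_square exp_add[symmetric])
  finally have e: "(1 + t / 2)\<^sup>2 \<le> exp t" .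
  have "(1 + t)\<^sup>2 \<le> (2 + t)\<^sup>2" using assms by (intro power_mono) auto
  also have "\<dots> = 4 * (1 + t / 2)\<^sup>2" by (simp add: power2_eq_square algebra_simps)
  finally have f: "(1 + t)\<^sup>2 \<le> 4 * exp t" using e by linarith
  have RR: "R * R \<ge> R" using assms by simp
  then have RR': "0 \<le> 1 + R * R - R" by linarith
  have "0 \<le> 2 * t * (1 + R * R - R) + t * t * (R * R)" using assms RR'
    by (intro add_nonneg_nonneg mult_nonneg_nonneg) auto
  then have "1 + (R + t)\<^sup>2 \<le> (1 + R\<^sup>2) * (1 + t)\<^sup>2" by (simp add: power2_eq_square algebra_simps)
  also have "\<dots> \<le> (1 + R\<^sup>2) * (4 * exp t)" using f by (intro mult_left_mono) auto
  finally show ?thesis by (simp add: algebra_simps)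
qed

context PC begin

lemma g_cont_sub: "S \<subseteq> {0<..} \<Longrightarrow> continuous_on S g"
  using g_cont continuous_on_subset by blast

lemma main_int: "(\<lambda>s. (1 + s\<^sup>2) * g s) absolutely_integrable_on {0<..}"
proof -
  define f where "f s = (1 + s\<^sup>2) * g s" for s
  have fc: "continuous_on S f" if "S \<subseteq> {0<..}" for S
    unfolding f_def[abs_def] by (intro continuous_intros g_cont_sub that)
  obtain \<delta> E where dE: "0 < \<delta>" "\<delta> \<le> 1" "E \<ge> 1"
    "\<And>s r. 0 < s \<Longrightarrow> s \<le> r \<Longrightarrow> r < \<delta> \<Longrightarrow> g s \<le> s / r * E * g r"
    using near0 by blast
  define r0 where "r0 = \<delta> / 2"
  have r0: "0 < r0" "r0 < \<delta>" "r0 \<le> 1" using dE unfolding r0_def by auto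
  obtain R where R: "R \<ge> 1" "\<And>r s. R \<le> r \<Longrightarrow> r \<le> s \<Longrightarrow> g s \<le> g r * exp (- \<beta> * (2 / \<beta>) * r * (s - r))"
    using atinf[of "2 / \<beta>"] bpos by auto
  obtain x0 where x0: "x0 \<in> {r0..R}" "\<And>y. y \<in> {r0..R} \<Longrightarrow> g y \<le> g x0"
    using continuous_attains_sup[of "{r0..R}" g] g_cont_sub[of "{r0..R}"] r0 R by force
  define B where "B = max (E * g r0) (g x0)"
  have gB: "g s \<le> B" if "0 < s" "s \<le> R" for s
  proof (cases "s \<le> r0")
    case True
    have "g s \<le> s / r0 * E * g r0" using dE(4)[of s r0] True that r0 by auto
    also have "\<dots> \<le> 1 * E * g r0" using True r0 that dE g_pos[of r0]
      by (intro mult_right_mono) auto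
    finally show ?thesis unfolding B_def by simp
  next
    case False then show ?thesis using x0(2)[of s] that unfolding B_def by auto
  qed
  have i1: "f integrable_on {0<..R}"
  proof (rule bound_int(1)[OF fc])
    show "(\<lambda>_. (1 + R\<^sup>2) * B) integrable_on {0<..R}" using const_Ioc[of 0 R "(1 + R\<^sup>2) * B"] R by (auto simp: integrable_on_def)
    fix x assume x: "x \<in> {0<..R}"
    have "1 + x\<^sup>2 \<le> 1 + R\<^sup>2" using x by (auto intro!: power_mono)
    then show "\<bar>f x\<bar> \<le> (1 + R\<^sup>2) * B" unfolding f_def using gB[of x] x g_pos[of x]
      by (simp add: abs_mult) (intro mult_mono, auto)
  qed auto
  define C2 where "C2 = 4 * (1 + R\<^sup>2) * g R * exp R"
  have i2: "f integrable_on {R..}"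
  proof (rule bound_int(1)[OF fc])
    show "(\<lambda>x. C2 * exp (- 1 * x)) integrable_on {R..}"
      using integrable_on_cmult_left[OF integrable_on_exp_minus_to_infinity[of 1 R], of C2] by simp
    fix s assume s: "s \<in> {R..}"
    then have sR: "s \<ge> R" by auto
    have "g s \<le> g R * exp (- \<beta> * (2 / \<beta>) * R * (s - R))" using R(2)[of R s] sR by auto
    also have "\<dots> = g R * exp (- 2 * R * (s - R))" using bpos by simp
    also have "\<dots> \<le> g R * exp (- (2 * (s - R)))"
    proof -
      have "2 * (s - R) \<le> (2 * R) * (s - R)" using sR R(1) by (intro mult_right_mono) auto
      then show ?thesis using g_pos[of R] by (intro mult_left_mono) auto
    qed
    finally have g1: "g s \<le> g R * exp (- (2 * (s - R)))" .
    have "1 + s\<^sup>2 \<le> 4 * (1 + R\<^sup>2) * exp (s - R)" using sq_bound[of R "s - R"] R sR by simp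
    then have "f s \<le> (4 * (1 + R\<^sup>2) * exp (s - R)) * (g R * exp (- (2 * (s - R))))"
      unfolding f_def using g1 g_pos[of s] by (intro mult_mono) auto
    also have "\<dots> = 4 * (1 + R\<^sup>2) * g R * (exp (s - R) * exp (- (2 * (s - R))))"
      by (simp add: mult_ac)
    also have "exp (s - R) * exp (- (2 * (s - R))) = exp R * exp (- 1 * s)"
      by (simp add: exp_add[symmetric])
    also have "4 * (1 + R\<^sup>2) * g R * (exp R * exp (- 1 * s)) = C2 * exp (- 1 * s)"
      unfolding C2_def by (simp add: mult_ac)
    finally show "\<bar>f s\<bar> \<le> C2 * exp (- 1 * s)" unfolding f_def using g_pos[of s]
      by (simp add: abs_mult)
  qed (use R in auto)
  have "f integrable_on ({0<..R} \<union> {R..})"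
  proof -
    have "(f has_integral (integral {0<..R} f + integral {R..} f)) ({0<..R} \<union> {R..})"
      by (rule has_integral_Un) (use i1 i2 in \<open>auto intro: negligible_subset[of "{R}"]\<close>)
    then show ?thesis by blast
  qed
  moreover have "{0<..R} \<union> {R..} = {0<..}" using R by auto
  ultimately have "f integrable_on {0<..}" by simp
  then show ?thesis unfolding f_def[symmetric]
    by (rule nonnegative_absolutely_integrable_1) (simp add: f_def g_pos less_imp_le)
qed

end


lemma sil_iff:
  fixes f :: "real \<Rightarrow> real"
  assumes "continuous_on {0<..} f"
  shows "set_integrable lborel {0<..} f \<longleftrightarrow> f absolutely_integrable_on {0<..}"
proof -
  have m: "(\<lambda>x. indicator {0<..} x *\<^sub>R f x) \<in> borel_measurable borel"
    by (rule borel_measurable_continuous_on_indicator) (use assms in auto)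
  show ?thesis unfolding set_integrable_def
    using integrable_completion[of "(\<lambda>x. indicator {0<..} x *\<^sub>R f x)" lborel] m
    by simp
qed

context PC begin

lemma abs_dom:
  assumes "continuous_on {0<..} f" "\<And>s. s > 0 \<Longrightarrow> \<bar>f s\<bar> \<le> C * ((1 + s\<^sup>2) * g s)"
  shows "f absolutely_integrable_on {0<..}"
proof (rule bound_int(2)[OF assms(1)])
  have "(\<lambda>s. (1 + s\<^sup>2) * g s) integrable_on {0<..}"
    using set_lebesgue_integral_eq_integral(1)[OF main_int] .
  then show "(\<lambda>s. C * ((1 + s\<^sup>2) * g s)) integrable_on {0<..}"
    using integrable_on_cmult_left[of "\<lambda>s. (1 + s\<^sup>2) * g s" "{0<..}" C] by simp
qed (use assms in auto)

abbreviation Z where "Z \<equiv> Zstar \<beta> d v"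
abbreviation rs where "rs \<equiv> rstar \<beta> d v"

lemma g_eq: "(\<lambda>r. exp (- \<beta> * vstar \<beta> d v r)) = g" by (simp add: g_def fun_eq_iff)

lemma g_int: "g absolutely_integrable_on {0<..}"
  by (rule abs_dom[of _ 1]) (use g_cont g_pos in \<open>auto simp: less_imp_le\<close>)

lemma Z_eq: "Z = integral {0<..} g"
proof -
  have "set_integrable lborel {0<..} g" using sil_iff[OF g_cont] g_int by simp
  then show ?thesis unfolding Zstar_def g_eq by (rule set_borel_integral_eq_integral(2))
qed

lemma Z_pos: "Z > 0"
proof -
  obtain x1 where x1: "x1 \<in> {1..2}" "\<And>y. y \<in> {1..2} \<Longrightarrow> g x1 \<le> g y"
    using continuous_attains_inf[of "{1..2::real}" g] g_cont_sub[of "{1..2}"] by force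
  have i12: "g integrable_on {1..2}"
    by (rule integrable_continuous_interval) (rule g_cont_sub, auto)
  have "g x1 = integral {1..2::real} (\<lambda>_. g x1)" using has_integral_const_real[of "g x1" 1 2]
    by (simp add: integral_unique)
  also have "\<dots> \<le> integral {1..2} g"
    by (rule integral_le) (use i12 x1 in auto)
  also have "\<dots> \<le> integral {0<..} g"
    by (rule integral_subset_le)
      (use i12 set_lebesgue_integral_eq_integral(1)[OF g_int] g_pos in \<open>auto simp: less_imp_le\<close>)
  finally show ?thesis unfolding Z_eq using g_pos[of x1] by simp
qed

definition w where "w r = indicator {0<..} r * exp (- \<beta> * vstar \<beta> d v r) / Z"

lemma w_eq: "w = (\<lambda>x. indicator {0<..} x *\<^sub>R (g x / Z))"
  by (simp add: w_def g_def fun_eq_iff)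

lemma w_meas: "w \<in> borel_measurable lborel"
  unfolding w_eq by (simp only: measurable_lborel2)
    (rule borel_measurable_continuous_on_indicator, simp, intro continuous_intros g_cont, use Z_pos in auto)

lemma w_nn: "w x \<ge> 0" unfolding w_eq using Z_pos g_pos[of x] by (auto simp: indicator_def)

lemma pistar_eq: "pistar \<beta> d v = density lborel (\<lambda>r. ennreal (w r))"
  unfolding pistar_def w_def ..

lemma rs_eq: "rs = integral {0<..} (\<lambda>s. s * g s) / Z"
proof -
  have "rs = integral\<^sup>L lborel (\<lambda>x. w x *\<^sub>R x)"
    unfolding rstar_def pistar_eq
    by (rule integral_density) (use w_meas w_nn in auto)
  also have "(\<lambda>x. w x *\<^sub>R x) = (\<lambda>x. indicator {0<..} x *\<^sub>R (x * g x / Z))"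
    unfolding w_eq by (simp add: fun_eq_iff)
  also have "integral\<^sup>L lborel \<dots> = (LINT x:{0<..}|lborel. x * g x / Z)"
    by (simp add: set_lebesgue_integral_def)
  also have "\<dots> = integral {0<..} (\<lambda>x. x * g x / Z)"
  proof (rule set_borel_integral_eq_integral(2))
    have c: "continuous_on {0<..} (\<lambda>x. x * g x / Z)"
      by (intro continuous_intros g_cont) (use Z_pos in auto)
    have "(\<lambda>x. x * g x / Z) absolutely_integrable_on {0<..}"
    proof (rule abs_dom[OF c, of "1 / Z"])
      fix s :: real assume s: "s > 0"
      have "s \<le> 1 + s\<^sup>2"
      proof (cases "s \<le> 1")
        case True then show ?thesis using zero_le_power2[of s] by linarith
      next
        case False
        then have "s * 1 \<le> s * s" using s by (intro mult_left_mono) auto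
        then show ?thesis by (simp add: power2_eq_square)
      qed
      then have "s * g s \<le> (1 + s\<^sup>2) * g s" using g_pos[of s] by (intro mult_right_mono) auto
      then show "\<bar>s * g s / Z\<bar> \<le> 1 / Z * ((1 + s\<^sup>2) * g s)"
        using s g_pos[of s] Z_pos by (simp add: abs_mult divide_right_mono)
    qed
    then show "set_integrable lborel {0<..} (\<lambda>x. x * g x / Z)" using sil_iff[OF c] by simp
  qed
  also have "\<dots> = integral {0<..} (\<lambda>s. s * g s) / Z" by simp
  finally show ?thesis .
qed

lemma L2_iff:
  assumes fc: "continuous_on {0<..} f"
  shows "L2pistar \<beta> d v f \<longleftrightarrow> (\<lambda>s. g s * (f s)\<^sup>2) absolutely_integrable_on {0<..}"
proof -
  have m: "(\<lambda>x. indicator {0<..} x *\<^sub>R (f x)\<^sup>2) \<in> borel_measurable lborel"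
    by (simp only: measurable_lborel2)
      (rule borel_measurable_continuous_on_indicator, simp, intro continuous_intros fc)
  have c: "continuous_on {0<..} (\<lambda>x. g x * (f x)\<^sup>2 / Z)"
    by (intro continuous_intros g_cont fc) (use Z_pos in auto)
  have "L2pistar \<beta> d v f \<longleftrightarrow> integrable lborel (\<lambda>x. w x *\<^sub>R (indicator {0<..} x *\<^sub>R (f x)\<^sup>2))"
    unfolding L2pistar_def set_integrable_def pistar_eq
    by (rule integrable_density) (use m w_meas w_nn in auto)
  also have "(\<lambda>x. w x *\<^sub>R (indicator {0<..} x *\<^sub>R (f x)\<^sup>2)) = (\<lambda>x. indicator {0<..} x *\<^sub>R (g x * (f x)\<^sup>2 / Z))"
    unfolding w_eq by (simp add: fun_eq_iff indicator_def)
  also have "integrable lborel \<dots> \<longleftrightarrow> set_integrable lborel {0<..} (\<lambda>x. g x * (f x)\<^sup>2 / Z)"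
    by (simp add: set_integrable_def)
  also have "\<dots> \<longleftrightarrow> (\<lambda>x. g x * (f x)\<^sup>2 / Z) absolutely_integrable_on {0<..}" by (rule sil_iff[OF c])
  also have "\<dots> \<longleftrightarrow> (\<lambda>s. g s * (f s)\<^sup>2) absolutely_integrable_on {0<..}"
  proof
    assume "(\<lambda>x. g x * (f x)\<^sup>2 / Z) absolutely_integrable_on {0<..}"
    then have "(\<lambda>x. g x * (f x)\<^sup>2 / Z * Z) absolutely_integrable_on {0<..}"
      by (rule set_integrable_mult_left)
    then show "(\<lambda>s. g s * (f s)\<^sup>2) absolutely_integrable_on {0<..}" using Z_pos by simp
  next
    assume "(\<lambda>s. g s * (f s)\<^sup>2) absolutely_integrable_on {0<..}"
    then show "(\<lambda>x. g x * (f x)\<^sup>2 / Z) absolutely_integrable_on {0<..}"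
      by (rule set_integrable_divide)
  qed
  finally show ?thesis .
qed

end

context PC begin

definition h where "h s = (rs - s) * g s"
definition F where "F r = integral {0<..r} h"
definition phi where "phi r = \<beta> * F r / g r"

lemma h_cont_sub: "S \<subseteq> {0<..} \<Longrightarrow> continuous_on S h"
  unfolding h_def[abs_def] by (intro continuous_intros g_cont_sub)

lemma s_le: "(s::real) \<ge> 0 \<Longrightarrow> s \<le> 1 + s\<^sup>2"
proof (cases "s \<le> 1")
  case True then show ?thesis using zero_le_power2[of s] by linarith
next
  case False
  then have "s * 1 \<le> s * s" by (intro mult_left_mono) auto
  then show ?thesis by (simp add: power2_eq_square)
qed

lemma h_int: "h absolutely_integrable_on {0<..}"
proof (rule abs_dom[of _ "\<bar>rs\<bar> + 1"])
  show "continuous_on {0<..} h" by (rule h_cont_sub) auto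
  fix s :: real assume s: "s > 0"
  have "\<bar>rs - s\<bar> \<le> \<bar>rs\<bar> * 1 + 1 * s" using abs_triangle_ineq4[of rs s] s by simp
  also have "\<dots> \<le> \<bar>rs\<bar> * (1 + s\<^sup>2) + 1 * (1 + s\<^sup>2)"
    using s_le[of s] s by (intro add_mono mult_left_mono) auto
  finally have "\<bar>rs - s\<bar> \<le> (\<bar>rs\<bar> + 1) * (1 + s\<^sup>2)" by (simp add: algebra_simps)
  then have "\<bar>rs - s\<bar> * g s \<le> ((\<bar>rs\<bar> + 1) * (1 + s\<^sup>2)) * g s"
    using g_pos[of s] by (intro mult_right_mono) auto
  moreover have "\<bar>h s\<bar> = \<bar>rs - s\<bar> * g s" unfolding h_def using g_pos[of s] by (simp add: abs_mult)
  ultimately show "\<bar>h s\<bar> \<le> (\<bar>rs\<bar> + 1) * ((1 + s\<^sup>2) * g s)" by (simp add: mult.assoc)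
qed

lemma h_int_sub: "S \<in> sets lebesgue \<Longrightarrow> S \<subseteq> {0<..} \<Longrightarrow> h integrable_on S"
  using set_lebesgue_integral_eq_integral(1)[OF set_integrable_subset[OF h_int]] by blast

lemma h_total: "integral {0<..} h = 0"
proof -
  have gi: "g integrable_on {0<..}" using set_lebesgue_integral_eq_integral(1)[OF g_int] .
  have sgi: "(\<lambda>s. s * g s) integrable_on {0<..}"
  proof -
    have "(\<lambda>s. s * g s) absolutely_integrable_on {0<..}"
    proof (rule abs_dom[of _ 1])
      show "continuous_on {0<..} (\<lambda>s. s * g s)" by (intro continuous_intros g_cont)
      fix s :: real assume "s > 0"
      then show "\<bar>s * g s\<bar> \<le> 1 * ((1 + s\<^sup>2) * g s)" using s_le[of s] g_pos[of s]
        by (simp add: abs_mult mult_right_mono)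
    qed
    then show ?thesis using set_lebesgue_integral_eq_integral(1) by blast
  qed
  have "h = (\<lambda>s. rs * g s - s * g s)" by (simp add: h_def fun_eq_iff algebra_simps)
  then have "integral {0<..} h = rs * integral {0<..} g - integral {0<..} (\<lambda>s. s * g s)"
  proof -
    have "integral {0<..} (\<lambda>s. rs * g s - s * g s) = integral {0<..} (\<lambda>s. rs * g s) - integral {0<..} (\<lambda>s. s * g s)"
      by (rule integral_diff) (use gi sgi integrable_on_cmult_left[of g "{0<..}" rs] in simp_all)
    moreover have "integral {0<..} (\<lambda>s. rs * g s) = rs * integral {0<..} g" by simp
    ultimately show ?thesis using \<open>h = _\<close> by simp
  qed
  also have "\<dots> = 0"
  proof -
    have "integral {0<..} (\<lambda>s. s * g s) = rs * Z" using rs_eq Z_pos by (simp add: field_simps)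
    then show ?thesis using Z_eq by simp
  qed
  finally show ?thesis .
qed

lemma F_split: "0 < a \<Longrightarrow> a \<le> x \<Longrightarrow> F x = F a + integral {a..x} h"
proof -
  assume a: "0 < a" "a \<le> x"
  have i1: "h integrable_on {0<..a}" by (rule h_int_sub) (use a in auto)
  have i2: "h integrable_on {a..x}" by (rule h_int_sub) (use a in auto)
  have n: "negligible ({0<..a} \<inter> {a..x})" by (rule negligible_subset[of "{a}"]) auto
  have "(h has_integral (F a + integral {a..x} h)) ({0<..a} \<union> {a..x})"
    unfolding F_def by (rule has_integral_Un[OF integrable_integral[OF i1] integrable_integral[OF i2] n])
  moreover have "{0<..a} \<union> {a..x} = {0<..x}" using a by auto
  ultimately show ?thesis unfolding F_def[of x] by (simp add: integral_unique)
qed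

lemma F_deriv: "r > 0 \<Longrightarrow> (F has_real_derivative h r) (at r)"
proof -
  assume r: "r > 0"
  define a where "a = r / 2"
  define b where "b = r + 1"
  have ab: "0 < a" "a < r" "r < b" using r by (auto simp: a_def b_def)
  have "((\<lambda>x. integral {a..x} h) has_real_derivative h r) (at r within {a..b})"
    by (rule integral_has_real_derivative) (use ab in \<open>auto intro!: h_cont_sub\<close>)
  then have "((\<lambda>x. F a + integral {a..x} h) has_real_derivative 0 + h r) (at r within {a..b})"
    by (intro DERIV_add DERIV_const)
  then have "((\<lambda>x. F a + integral {a..x} h) has_real_derivative h r) (at r within {a..b})"
    by simp
  then have "(F has_real_derivative h r) (at r within {a..b})"
  proof (rule has_field_derivative_transform_within[where d=1])
    fix x assume "x \<in> {a..b}"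
    then show "F a + integral {a..x} h = F x" using F_split[of a x] ab by simp
  qed (use ab in auto)
  moreover have "at r within {a..b} = at r" by (rule at_within_interior) (use ab in simp)
  ultimately show ?thesis by simp
qed

lemma F_tail: "r > 0 \<Longrightarrow> F r = - integral {r..} h"
proof -
  assume r: "r > 0"
  have i1: "h integrable_on {0<..r}" by (rule h_int_sub) (use r in auto)
  have i2: "h integrable_on {r..}" by (rule h_int_sub) (use r in auto)
  have n: "negligible ({0<..r} \<inter> {r..})" by (rule negligible_subset[of "{r}"]) auto
  have "(h has_integral (F r + integral {r..} h)) ({0<..r} \<union> {r..})"
    unfolding F_def by (rule has_integral_Un[OF integrable_integral[OF i1] integrable_integral[OF i2] n])
  moreover have "{0<..r} \<union> {r..} = {0<..}" using r by auto
  ultimately have "F r + integral {r..} h = 0" using h_total by (simp add: integral_unique)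
  then show ?thesis by simp
qed

lemma phi_deriv: "r > 0 \<Longrightarrow> (phi has_real_derivative \<beta> * (rs - r) + \<beta> * vs' r * phi r) (at r)"
proof -
  assume r: "r > 0"
  have "((\<lambda>r. \<beta> * F r / g r) has_real_derivative
      (\<beta> * h r * g r - \<beta> * F r * (- \<beta> * vs' r * g r)) / (g r * g r)) (at r)"
    by (intro DERIV_divide DERIV_cmult F_deriv g_deriv r) (use g_pos[of r] in simp)
  moreover have "(\<beta> * h r * g r - \<beta> * F r * (- \<beta> * vs' r * g r)) / (g r * g r)
      = \<beta> * (rs - r) + \<beta> * vs' r * phi r"
    using g_pos[of r] unfolding h_def phi_def by (simp add: field_simps)
  ultimately show ?thesis unfolding phi_def[abs_def] by simp
qed

lemma phi_sol: "is_solution \<beta> d v v' phi"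
  unfolding is_solution_def
proof (intro allI impI conjI)
  fix r :: real assume r: "r > 0"
  show "phi differentiable (at r)" using phi_deriv[OF r] real_differentiable_def by blast
  have "deriv phi r = \<beta> * (rs - r) + \<beta> * vs' r * phi r" using DERIV_imp_deriv[OF phi_deriv[OF r]] .
  then have "deriv phi r = \<beta> * ((rs - r) + vs' r * phi r)" by (simp add: algebra_simps)
  then have "deriv phi r / \<beta> = (rs - r) + vs' r * phi r" using bpos by simp
  then show "deriv phi r / \<beta> = rs - r + (v' r - (real d - 1) / (\<beta> * r)) * phi r"
    unfolding vs'_def by simp
qed

lemma phi_cont: "continuous_on {0<..} phi"
  by (intro continuous_at_imp_continuous_on ballI DERIV_isCont[OF phi_deriv]) auto

end


lemma expint: fixes b r :: real assumes "b > 0"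
  shows "((\<lambda>s. exp (- b * (s - r))) has_integral 1 / b) {r..}"
proof -
  have A: "((\<lambda>s. exp (b * r) * exp (- b * s)) has_integral exp (b * r) * (exp (- b * r) / b)) {r..}"
    by (rule has_integral_mult_right) (rule has_integral_exp_minus_to_infinity[OF assms])
  have e1: "(\<lambda>s. exp (b * r) * exp (- b * s)) = (\<lambda>s. exp (- b * (s - r)))"
    by (simp add: fun_eq_iff exp_add[symmetric] algebra_simps)
  have e2: "exp (b * r) * (exp (- b * r) / b) = 1 / b"
    by (simp add: exp_add[symmetric])
  show ?thesis using A unfolding e1 e2 .
qed

context PC begin

lemma phi_lim0: "(phi \<longlongrightarrow> 0) (at_right 0)"
proof -
  obtain \<delta> E where dE: "0 < \<delta>" "\<delta> \<le> 1" "E \<ge> 1"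
    "\<And>s r. 0 < s \<Longrightarrow> s \<le> r \<Longrightarrow> r < \<delta> \<Longrightarrow> g s \<le> s / r * E * g r"
    using near0 by blast
  define C where "C = \<beta> * ((\<bar>rs\<bar> + 1) * E)"
  have bnd: "\<bar>phi r\<bar> \<le> C * r" if r: "0 < r" "r < \<delta>" for r
  proof -
    define c where "c = (\<bar>rs\<bar> + 1) * E * g r"
    have hb: "norm (h s) \<le> c" if s: "s \<in> {0<..r}" for s
    proof -
      have "\<bar>rs - s\<bar> \<le> \<bar>rs\<bar> + 1" using abs_triangle_ineq4[of rs s] s r dE by auto
      moreover have "g s \<le> E * g r"
      proof -
        have "g s \<le> s / r * E * g r" using dE(4)[of s r] s r by auto
        also have "\<dots> \<le> 1 * E * g r" using s r dE g_pos[of r]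
          by (intro mult_right_mono) auto
        finally show ?thesis by simp
      qed
      ultimately have "\<bar>rs - s\<bar> * g s \<le> (\<bar>rs\<bar> + 1) * (E * g r)"
        using g_pos[of s] by (intro mult_mono) auto
      then show ?thesis unfolding h_def c_def using g_pos[of s] by (simp add: abs_mult mult.assoc)
    qed
    have "norm (F r) \<le> integral {0<..r} (\<lambda>_. c)"
      unfolding F_def
      by (rule integral_norm_bound_integral[OF h_int_sub _ hb])
        (use r const_Ioc[of 0 r c] in \<open>auto simp: integrable_on_def\<close>)
    also have "\<dots> = r * c" using const_Ioc[of 0 r c] r by (simp add: integral_unique)
    finally have Fb: "\<bar>F r\<bar> \<le> r * c" by simp
    have "\<bar>phi r\<bar> = \<beta> * \<bar>F r\<bar> / g r" unfolding phi_def using bpos g_pos[of r] by (simp add: abs_mult)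
    also have "\<dots> \<le> \<beta> * (r * c) / g r" using Fb bpos g_pos[of r]
      by (intro divide_right_mono mult_left_mono) auto
    also have "\<dots> = C * r" unfolding c_def C_def using g_pos[of r] by (simp add: field_simps)
    finally show ?thesis .
  qed
  show ?thesis
  proof (rule Lim_null_comparison)
    show "eventually (\<lambda>x. norm (phi x) \<le> C * x) (at_right 0)"
      using eventually_at_right_real[OF dE(1)] by eventually_elim (use bnd in auto)
    have "((\<lambda>x. C * x) \<longlongrightarrow> C * 0) (at_right 0)" by (intro tendsto_intros)
    then show "((\<lambda>x. C * x) \<longlongrightarrow> 0) (at_right 0)" by simp
  qed
qed

lemma phi_bound_top:
  assumes K: "K \<ge> 1"
  shows "\<exists>R. \<forall>r\<ge>R. \<bar>phi r\<bar> \<le> (1 + \<bar>rs\<bar> + 4 / \<beta>) / K"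
proof -
  obtain R where R: "R \<ge> 1" "\<And>r s. R \<le> r \<Longrightarrow> r \<le> s \<Longrightarrow> g s \<le> g r * exp (- \<beta> * K * r * (s - r))"
    using atinf[of K] K by auto
  have "\<bar>phi r\<bar> \<le> (1 + \<bar>rs\<bar> + 4 / \<beta>) / K" if r: "r \<ge> R" for r
  proof -
    have r1: "r \<ge> 1" "r > 0" using r R by auto
    define a where "a = \<beta> * K * r"
    have a: "a > 0" unfolding a_def using bpos K r1 by simp
    define G where "G s = g r * ((r + \<bar>rs\<bar>) * exp (- a * (s - r)) + (2 / a) * exp (- (a / 2) * (s - r)))" for s
    have Gi: "(G has_integral g r * ((r + \<bar>rs\<bar>) * (1 / a) + (2 / a) * (1 / (a / 2)))) {r..}"
      unfolding G_def
      by (intro has_integral_mult_right has_integral_add expint) (use a in auto)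
    have hb: "norm (h s) \<le> G s" if s: "s \<in> {r..}" for s
    proof -
      have sr: "s \<ge> r" using s by auto
      have gs: "g s \<le> g r * exp (- a * (s - r))" using R(2)[OF r sr] unfolding a_def by simp
      have "\<bar>rs - s\<bar> \<le> (r + \<bar>rs\<bar>) + (s - r)" using abs_triangle_ineq4[of rs s] sr r1 by simp
      then have "\<bar>h s\<bar> \<le> ((r + \<bar>rs\<bar>) + (s - r)) * g s" unfolding h_def using g_pos[of s]
        by (simp add: abs_mult mult_right_mono)
      also have "\<dots> \<le> ((r + \<bar>rs\<bar>) + (s - r)) * (g r * exp (- a * (s - r)))"
        using gs sr r1 by (intro mult_left_mono) auto
      also have "\<dots> = g r * ((r + \<bar>rs\<bar>) * exp (- a * (s - r)) + (s - r) * exp (- a * (s - r)))"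
        by (simp add: algebra_simps)
      also have "(s - r) * exp (- a * (s - r)) \<le> (2 / a) * exp (- (a / 2) * (s - r))"
      proof -
        have "a / 2 * (s - r) \<le> exp (a / 2 * (s - r))"
          using exp_ge_add_one_self[of "a / 2 * (s - r)"] by linarith
        then have "s - r \<le> 2 / a * exp (a / 2 * (s - r))" using a by (simp add: field_simps)
        then have "(s - r) * exp (- a * (s - r)) \<le> (2 / a * exp (a / 2 * (s - r))) * exp (- a * (s - r))"
          by (intro mult_right_mono) auto
        also have "\<dots> = (2 / a) * exp (- (a / 2) * (s - r))"
          by (simp add: mult.assoc exp_add[symmetric] algebra_simps)
        finally show ?thesis .
      qed
      finally show ?thesis unfolding G_def using g_pos[of r]
        by (simp add: mult_left_mono)
    qed
    have "\<bar>F r\<bar> = norm (integral {r..} h)" using F_tail[OF r1(2)] by simp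
    also have "\<dots> \<le> integral {r..} G"
      by (rule integral_norm_bound_integral[OF h_int_sub _ hb]) (use r1 Gi in \<open>auto simp: integrable_on_def\<close>)
    also have "\<dots> = g r * ((r + \<bar>rs\<bar>) / a + 4 / (a * a))" using integral_unique[OF Gi] by simp
    finally have Fb: "\<bar>F r\<bar> \<le> g r * ((r + \<bar>rs\<bar>) / a + 4 / (a * a))" .
    have "\<bar>phi r\<bar> = \<beta> * \<bar>F r\<bar> / g r" unfolding phi_def using bpos g_pos[of r] by (simp add: abs_mult)
    also have "\<dots> \<le> \<beta> * (g r * ((r + \<bar>rs\<bar>) / a + 4 / (a * a))) / g r" using Fb bpos g_pos[of r]
      by (intro divide_right_mono mult_left_mono) auto
    also have "\<dots> = \<beta> * ((r + \<bar>rs\<bar>) / a + 4 / (a * a))" using g_pos[of r] by simp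
    also have "\<dots> = \<beta> * ((r + \<bar>rs\<bar>) / a) + \<beta> * (4 / (a * a))" by (rule distrib_left)
    finally have fin0: "\<bar>phi r\<bar> \<le> \<beta> * ((r + \<bar>rs\<bar>) / a) + \<beta> * (4 / (a * a))" .
    have A1: "\<beta> * ((r + \<bar>rs\<bar>) / a) = (1 + \<bar>rs\<bar> / r) / K"
      unfolding a_def using bpos K r1 by (simp add: field_simps)
    have A2: "(1 + \<bar>rs\<bar> / r) / K \<le> (1 + \<bar>rs\<bar>) / K"
    proof -
      have "\<bar>rs\<bar> / r \<le> \<bar>rs\<bar> / 1" by (rule divide_left_mono) (use r1 in auto)
      then show ?thesis using K by (intro divide_right_mono) auto
    qed
    have B1: "\<beta> * (4 / (a * a)) = 4 / (\<beta> * ((K * r) * (K * r)))"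
      unfolding a_def using bpos by (simp add: field_simps)
    have B2: "4 / (\<beta> * ((K * r) * (K * r))) \<le> 4 / (\<beta> * K)"
    proof (rule divide_left_mono)
      have "K * 1 \<le> K * r" using K r1 by (intro mult_left_mono) auto
      moreover have Kr: "1 \<le> K * r" using mult_mono[of 1 K 1 r] K r1 by simp
      moreover have "(K * r) * 1 \<le> (K * r) * (K * r)" using Kr by (intro mult_left_mono) auto
      ultimately have "K * 1 \<le> (K * r) * (K * r)" by linarith
      then show "\<beta> * K \<le> \<beta> * ((K * r) * (K * r))" using bpos by (intro mult_left_mono) auto
    qed (use bpos K r1 in auto)
    have fin: "\<bar>phi r\<bar> \<le> (1 + \<bar>rs\<bar>) / K + 4 / (\<beta> * K)"
      using fin0 A1 A2 B1 B2 by linarith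
    have "(1 + \<bar>rs\<bar>) / K + 4 / (\<beta> * K) = (1 + \<bar>rs\<bar> + 4 / \<beta>) / K"
      by (simp add: add_divide_distrib divide_divide_eq_left)
    then show ?thesis using fin by simp
  qed
  then show ?thesis by blast
qed

lemma phi_limtop: "(phi \<longlongrightarrow> 0) at_top"
proof (rule tendstoI)
  fix e :: real assume e: "e > 0"
  define C0 where "C0 = 1 + \<bar>rs\<bar> + 4 / \<beta>"
  have C0: "C0 > 0" unfolding C0_def using bpos by (simp add: add_pos_nonneg)
  define K where "K = max 1 (2 * C0 / e)"
  have K: "K \<ge> 1" unfolding K_def by simp
  obtain R where R: "\<And>r. r \<ge> R \<Longrightarrow> \<bar>phi r\<bar> \<le> C0 / K" using phi_bound_top[OF K] unfolding C0_def by blast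
  have h1: "C0 / K \<le> C0 / (2 * C0 / e)"
    by (rule divide_left_mono) (use C0 e in \<open>auto simp: K_def\<close>)
  have h2: "C0 / (2 * C0 / e) = e / 2" using C0 e by simp
  have "C0 / K < e" using h1 h2 e by linarith
  then show "eventually (\<lambda>x. dist (phi x) 0 < e) at_top"
    unfolding eventually_at_top_linorder
  proof (intro exI[of _ R] allI impI)
    fix x assume "x \<ge> R"
    then show "dist (phi x) 0 < e" using R[of x] \<open>C0 / K < e\<close> by simp
  qed
qed

end


lemma inv_not_int:
  fixes r0 :: real assumes r0: "r0 > 0"
  shows "\<not> (\<lambda>s. 1 / s) integrable_on {0<..r0}"
proof
  assume int: "(\<lambda>s. 1 / s) integrable_on {0<..r0}"
  define I where "I = integral {0<..r0} (\<lambda>s. 1 / s)"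
  define \<epsilon> where "\<epsilon> = min r0 (exp (ln r0 - I - 1))"
  have e: "0 < \<epsilon>" "\<epsilon> \<le> r0" unfolding \<epsilon>_def using r0 by auto
  have lne: "ln \<epsilon> \<le> ln r0 - I - 1"
  proof -
    have "\<epsilon> \<le> exp (ln r0 - I - 1)" unfolding \<epsilon>_def by simp
    then have "ln \<epsilon> \<le> ln (exp (ln r0 - I - 1))" using e(1) by (rule ln_mono)
    then show ?thesis by simp
  qed
  have ftc: "((\<lambda>s. 1 / s) has_integral (ln r0 - ln \<epsilon>)) {\<epsilon>..r0}"
  proof (rule fundamental_theorem_of_calculus[OF e(2)])
    fix x assume x: "x \<in> {\<epsilon>..r0}"
    then have "x > 0" using e by auto
    then have "(ln has_real_derivative inverse x) (at x within {\<epsilon>..r0})"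
      by (rule has_field_derivative_at_within[OF DERIV_ln])
    then show "(ln has_vector_derivative 1 / x) (at x within {\<epsilon>..r0})"
      unfolding has_real_derivative_iff_has_vector_derivative[symmetric] by (simp add: divide_inverse)
  qed
  have "ln r0 - ln \<epsilon> = integral {\<epsilon>..r0} (\<lambda>s. 1 / s)" using ftc by (simp add: integral_unique)
  also have "\<dots> \<le> I" unfolding I_def
  proof (rule integral_subset_le)
    show "{\<epsilon>..r0} \<subseteq> {0<..r0}" using e by auto
    show "(\<lambda>s. 1 / s) integrable_on {\<epsilon>..r0}" using has_integral_integrable[OF ftc] .
    show "(\<lambda>s. 1 / s) integrable_on {0<..r0}" by (rule int)
    show "\<forall>x\<in>{0<..r0}. 0 \<le> 1 / x" by simp
  qed
  finally show False using lne by linarith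
qed

context PC begin

lemma phi_bdd: "\<exists>B\<ge>0. \<forall>r>0. \<bar>phi r\<bar> \<le> B"
proof -
  have "eventually (\<lambda>x. dist (phi x) 0 < 1) (at_right 0)"
    by (rule tendstoD[OF phi_lim0 zero_less_one])
  then obtain b where b: "b > 0" "\<And>y. y > 0 \<Longrightarrow> y < b \<Longrightarrow> \<bar>phi y\<bar> < 1"
    unfolding eventually_at_right[OF zero_less_one] by (auto simp: dist_real_def)
  have "eventually (\<lambda>x. dist (phi x) 0 < 1) at_top"
    by (rule tendstoD[OF phi_limtop zero_less_one])
  then obtain N where N: "\<And>x. x \<ge> N \<Longrightarrow> \<bar>phi x\<bar> < 1"
    unfolding eventually_at_top_linorder by (auto simp: dist_real_def)
  define M where "M = max N b"
  have pc0: "continuous_on {b..M} phi" by (rule continuous_on_subset[OF phi_cont]) (use b in auto)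
  have pc: "continuous_on {b..M} (\<lambda>r. \<bar>phi r\<bar>)" by (rule continuous_on_rabs[OF pc0])
  have ne: "{b..M} \<noteq> {}" unfolding M_def by simp
  obtain x where x: "x \<in> {b..M}" "\<And>y. y \<in> {b..M} \<Longrightarrow> \<bar>phi y\<bar> \<le> \<bar>phi x\<bar>"
    using continuous_attains_sup[OF compact_Icc ne pc] by blast
  have "\<bar>phi r\<bar> \<le> max 1 \<bar>phi x\<bar>" if r: "r > 0" for r
  proof (cases "r < b")
    case True then show ?thesis using b(2)[OF r] by simp
  next
    case False
    show ?thesis
    proof (cases "r \<ge> N")
      case True then show ?thesis using N[of r] by simp
    next
      case False
      then have "r \<in> {b..M}" using \<open>\<not> r < b\<close> unfolding M_def by auto
      then show ?thesis using x(2)[of r] by simp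
    qed
  qed
  then show ?thesis by (intro exI[of _ "max 1 \<bar>phi x\<bar>"] conjI allI impI) auto
qed

lemma L2_bound:
  assumes fc: "continuous_on {0<..} f" and b: "\<And>s. s > 0 \<Longrightarrow> (f s)\<^sup>2 \<le> C * (1 + s\<^sup>2)"
  shows "L2pistar \<beta> d v f"
  unfolding L2_iff[OF fc]
proof (rule abs_dom[of _ C])
  show "continuous_on {0<..} (\<lambda>s. g s * (f s)\<^sup>2)" by (intro continuous_intros g_cont fc)
  fix s :: real assume s: "s > 0"
  have "g s * (f s)\<^sup>2 \<le> g s * (C * (1 + s\<^sup>2))" using b[OF s] g_pos[of s] by (intro mult_left_mono) auto
  then show "\<bar>g s * (f s)\<^sup>2\<bar> \<le> C * ((1 + s\<^sup>2) * g s)" using g_pos[of s] by (simp add: mult_ac)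
qed

lemma phi_L2: "L2pistar \<beta> d v phi"
proof -
  obtain B where B: "B \<ge> 0" "\<And>r. r > 0 \<Longrightarrow> \<bar>phi r\<bar> \<le> B" using phi_bdd by blast
  show ?thesis
  proof (rule L2_bound[OF phi_cont, of "B\<^sup>2"])
    fix s :: real assume s: "s > 0"
    have "(phi s)\<^sup>2 = \<bar>phi s\<bar>\<^sup>2" by simp
    also have "\<dots> \<le> B\<^sup>2" using B(2)[OF s] by (intro power_mono) auto
    also have "\<dots> \<le> B\<^sup>2 * (1 + s\<^sup>2)" by (simp add: algebra_simps)
    finally show "(phi s)\<^sup>2 \<le> B\<^sup>2 * (1 + s\<^sup>2)" .
  qed
qed

lemma prim_L2:
  assumes P: "\<forall>r>0. (P has_real_derivative phi r) (at r)"
  shows "L2pistar \<beta> d v P"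
proof -
  obtain B where B: "B \<ge> 0" "\<And>r. r > 0 \<Longrightarrow> \<bar>phi r\<bar> \<le> B" using phi_bdd by blast
  have Pc: "continuous_on {0<..} P"
    by (intro continuous_at_imp_continuous_on ballI DERIV_isCont) (use P in auto)
  define A where "A = \<bar>P 1\<bar>"
  show ?thesis
  proof (rule L2_bound[OF Pc, of "2 * (A + B)\<^sup>2 + 2 * B\<^sup>2"])
    fix s :: real assume s: "s > 0"
    have "norm (P s - P 1) \<le> B * norm (s - 1)"
    proof (rule field_differentiable_bound[of "{0<..}" P phi B])
      fix z :: real assume "z \<in> {0<..}"
      then have "(P has_real_derivative phi z) (at z)" using P by auto
      then show "(P has_field_derivative phi z) (at z within {0<..})"
        by (rule has_field_derivative_at_within)
      show "norm (phi z) \<le> B" using B(2) \<open>z \<in> {0<..}\<close> by simp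
    qed (use s in auto)
    then have "\<bar>P s\<bar> \<le> A + B * \<bar>s - 1\<bar>" unfolding A_def by simp
    also have "B * \<bar>s - 1\<bar> \<le> B * (1 + s)" using B s by (intro mult_left_mono) auto
    finally have Ps: "\<bar>P s\<bar> \<le> (A + B) + B * s" by (simp add: algebra_simps)
    have "(P s)\<^sup>2 = \<bar>P s\<bar>\<^sup>2" by simp
    also have "\<dots> \<le> ((A + B) + B * s)\<^sup>2" using Ps by (intro power_mono) auto
    also have "\<dots> \<le> 2 * (A + B)\<^sup>2 + 2 * (B * s)\<^sup>2"
    proof -
      have "0 \<le> ((A + B) - B * s)\<^sup>2" by simp
      then show ?thesis by (simp add: power2_eq_square algebra_simps)
    qed
    also have "\<dots> \<le> (2 * (A + B)\<^sup>2 + 2 * B\<^sup>2) * (1 + s\<^sup>2)"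
      by (simp add: algebra_simps power_mult_distrib)
    finally show "(P s)\<^sup>2 \<le> (2 * (A + B)\<^sup>2 + 2 * B\<^sup>2) * (1 + s\<^sup>2)" .
  qed
qed

end


context PC begin

lemma uniq:
  assumes sol: "is_solution \<beta> d v v' \<psi>" and L2: "L2pistar \<beta> d v \<psi>"
  shows "\<forall>r>0. \<psi> r = phi r"
proof -
  have dpsi: "(\<psi> has_real_derivative \<beta> * (rs - r + vs' r * \<psi> r)) (at r)" if r: "r > 0" for r
  proof -
    have d: "\<psi> differentiable (at r)"
      and e: "deriv \<psi> r / \<beta> = rs - r + (v' r - (real d - 1) / (\<beta> * r)) * \<psi> r"
      using sol r unfolding is_solution_def by auto
    have D: "(\<psi> has_real_derivative deriv \<psi> r) (at r)"
      using d by (simp add: DERIV_deriv_iff_real_differentiable)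
    have "deriv \<psi> r = \<beta> * (deriv \<psi> r / \<beta>)" using bpos by simp
    also have "\<dots> = \<beta> * (rs - r + vs' r * \<psi> r)" using e unfolding vs'_def by simp
    finally show ?thesis using D by simp
  qed
  define u where "u r = \<psi> r * g r - \<beta> * F r" for r
  have du: "(u has_real_derivative 0) (at r within {0<..})" if r: "r \<in> {0<..}" for r
  proof -
    have r0: "r > 0" using r by simp
    have "(u has_real_derivative (\<beta> * (rs - r + vs' r * \<psi> r) * g r + (- \<beta> * vs' r * g r) * \<psi> r - \<beta> * h r)) (at r)"
      unfolding u_def[abs_def] by (intro DERIV_diff DERIV_mult DERIV_cmult dpsi g_deriv F_deriv r0)
    moreover have "\<beta> * (rs - r + vs' r * \<psi> r) * g r + (- \<beta> * vs' r * g r) * \<psi> r - \<beta> * h r = 0"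
      unfolding h_def by (simp add: algebra_simps)
    ultimately have "(u has_real_derivative 0) (at r)" by simp
    then show ?thesis by (rule has_field_derivative_at_within)
  qed
  obtain c where c: "\<forall>x\<in>{0<..}. u x = c"
    using has_field_derivative_zero_constant[of "{0<..} :: real set" u, OF _ du] by auto
  have psi_eq: "\<psi> r = phi r + c / g r" if r: "r > 0" for r
  proof -
    have "u r = c" using c r by simp
    then have "\<psi> r * g r = c + \<beta> * F r" unfolding u_def by simp
    then have "\<psi> r = (c + \<beta> * F r) / g r" using g_pos[of r] by (simp add: eq_divide_eq)
    then show ?thesis unfolding phi_def by (simp add: add_divide_distrib)
  qed
  show ?thesis
  proof (cases "c = 0")
    case True then show ?thesis using psi_eq by simp
  next
    case False
    have psic: "continuous_on {0<..} \<psi>"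
      by (intro continuous_at_imp_continuous_on ballI DERIV_isCont[OF dpsi]) auto
    have A1: "(\<lambda>s. g s * (\<psi> s)\<^sup>2) absolutely_integrable_on {0<..}" using L2 L2_iff[OF psic] by simp
    have A2: "(\<lambda>s. g s * (phi s)\<^sup>2) absolutely_integrable_on {0<..}" using phi_L2 L2_iff[OF phi_cont] by simp
    have Ic: "(\<lambda>s. c\<^sup>2 / g s) absolutely_integrable_on {0<..}"
    proof (rule bound_int(2))
      show "continuous_on {0<..} (\<lambda>s. c\<^sup>2 / g s)"
        by (intro continuous_intros g_cont) (use g_pos in \<open>auto simp: less_imp_neq[symmetric]\<close>)
      show "({0<..} :: real set) \<in> sets lebesgue" by simp
      have i1: "(\<lambda>s. g s * (\<psi> s)\<^sup>2) integrable_on {0<..}" using set_lebesgue_integral_eq_integral(1)[OF A1] .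
      have i2: "(\<lambda>s. g s * (phi s)\<^sup>2) integrable_on {0<..}" using set_lebesgue_integral_eq_integral(1)[OF A2] .
      show "(\<lambda>s. 2 * (g s * (\<psi> s)\<^sup>2) + 2 * (g s * (phi s)\<^sup>2)) integrable_on {0<..}"
        by (intro integrable_add) (use integrable_on_cmult_left[OF i1, of 2] integrable_on_cmult_left[OF i2, of 2] in simp_all)
      fix s :: real assume "s \<in> {0<..}"
      then have s: "s > 0" by simp
      have "c\<^sup>2 / g s = g s * (c / g s)\<^sup>2" using g_pos[of s] by (simp add: power2_eq_square)
      also have "c / g s = \<psi> s - phi s" using psi_eq[OF s] by simp
      also have "g s * (\<psi> s - phi s)\<^sup>2 \<le> g s * (2 * (\<psi> s)\<^sup>2 + 2 * (phi s)\<^sup>2)"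
      proof -
        have "0 \<le> (\<psi> s + phi s)\<^sup>2" by simp
        then have "(\<psi> s - phi s)\<^sup>2 \<le> 2 * (\<psi> s)\<^sup>2 + 2 * (phi s)\<^sup>2"
          by (simp add: power2_eq_square algebra_simps)
        then show ?thesis using g_pos[of s] by (intro mult_left_mono) auto
      qed
      also have "\<dots> = 2 * (g s * (\<psi> s)\<^sup>2) + 2 * (g s * (phi s)\<^sup>2)" by (simp add: algebra_simps)
      finally show "\<bar>c\<^sup>2 / g s\<bar> \<le> 2 * (g s * (\<psi> s)\<^sup>2) + 2 * (g s * (phi s)\<^sup>2)"
        using g_pos[of s] by simp
    qed
    obtain \<delta> E where dE: "0 < \<delta>" "\<delta> \<le> 1" "E \<ge> 1"
      "\<And>s r. 0 < s \<Longrightarrow> s \<le> r \<Longrightarrow> r < \<delta> \<Longrightarrow> g s \<le> s / r * E * g r"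
      using near0 by blast
    define r0 where "r0 = \<delta> / 2"
    have r0: "0 < r0" "r0 < \<delta>" using dE unfolding r0_def by auto
    define k where "k = E * g r0 / (r0 * c\<^sup>2)"
    have "(\<lambda>s. 1 / s) integrable_on {0<..r0}"
    proof (rule bound_int(1))
      show "continuous_on {0<..r0} (\<lambda>s. 1 / s)" by (intro continuous_intros) auto
      show "{0<..r0} \<in> sets lebesgue" by simp
      have "(\<lambda>s. c\<^sup>2 / g s) absolutely_integrable_on {0<..r0}"
        by (rule set_integrable_subset[OF Ic]) auto
      then have "(\<lambda>s. c\<^sup>2 / g s) integrable_on {0<..r0}" using set_lebesgue_integral_eq_integral(1) by blast
      then show "(\<lambda>s. k * (c\<^sup>2 / g s)) integrable_on {0<..r0}"
        using integrable_on_cmult_left[of "\<lambda>s. c\<^sup>2 / g s" "{0<..r0}" k] by simp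
      fix s assume "s \<in> {0<..r0}"
      then have s: "0 < s" "s \<le> r0" by auto
      have gs: "g s \<le> s / r0 * E * g r0" using dE(4)[of s r0] s r0 by auto
      then have "r0 * g s \<le> s * (E * g r0)" using r0 by (simp add: field_simps)
      moreover have "k * (c\<^sup>2 / g s) = (E * g r0) / (r0 * g s)"
        unfolding k_def using False g_pos[of s] r0 by (simp add: field_simps)
      ultimately have "1 / s \<le> k * (c\<^sup>2 / g s)"
      proof -
        assume a1: "r0 * g s \<le> s * (E * g r0)" and a2: "k * (c\<^sup>2 / g s) = (E * g r0) / (r0 * g s)"
        have pos: "0 < r0 * g s" using r0 g_pos[of s] by simp
        have "r0 * g s / s \<le> E * g r0" using a1 s by (simp add: pos_divide_le_eq mult.commute)
        then have "1 / s * (r0 * g s) \<le> E * g r0" by simp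
        then have "1 / s \<le> (E * g r0) / (r0 * g s)" using pos by (simp add: pos_le_divide_eq)
        then show ?thesis using a2 by simp
      qed
      then show "\<bar>1 / s\<bar> \<le> k * (c\<^sup>2 / g s)" using s by simp
    qed
    then show ?thesis using inv_not_int[OF r0(1)] by simp
  qed
qed

end

theorem propositionC1:
  fixes d :: nat and \<beta> :: real and v v' :: "real \<Rightarrow> real"
  assumes "d \<ge> 2" and "\<beta> > 0"
    and "\<And>r. r > 0 \<Longrightarrow> (v has_real_derivative v' r) (at r)"
    and "continuous_on {0<..} v'"
    and "Limsup (at_right 0) (\<lambda>r. ereal (v' r)) < \<infinity>"
    and "filterlim (\<lambda>r. v' r / r) at_top at_top"
  shows "\<exists>\<phi>. is_solution \<beta> d v v' \<phi> \<and> L2pistar \<beta> d v \<phi>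
            \<and> (\<forall>\<Phi>. (\<forall>r>0. (\<Phi> has_real_derivative \<phi> r) (at r)) \<longrightarrow> L2pistar \<beta> d v \<Phi>)
            \<and> (\<forall>\<psi>. is_solution \<beta> d v v' \<psi> \<and> L2pistar \<beta> d v \<psi>
                   \<and> (\<forall>\<Psi>. (\<forall>r>0. (\<Psi> has_real_derivative \<psi> r) (at r)) \<longrightarrow> L2pistar \<beta> d v \<Psi>)
                   \<longrightarrow> (\<forall>r>0. \<psi> r = \<phi> r))
            \<and> (\<phi> \<longlongrightarrow> 0) (at_right 0)
            \<and> (\<phi> \<longlongrightarrow> 0) at_top"
proof -
  interpret L: PC d \<beta> v v' using assms by unfold_locales
  show ?thesis
  proof (rule exI[of _ L.phi], intro conjI)
    show "is_solution \<beta> d v v' L.phi" by (rule L.phi_sol)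
    show "L2pistar \<beta> d v L.phi" by (rule L.phi_L2)
    show "\<forall>\<Phi>. (\<forall>r>0. (\<Phi> has_real_derivative L.phi r) (at r)) \<longrightarrow> L2pistar \<beta> d v \<Phi>"
      using L.prim_L2 by blast
    show "\<forall>\<psi>. is_solution \<beta> d v v' \<psi> \<and> L2pistar \<beta> d v \<psi>
                   \<and> (\<forall>\<Psi>. (\<forall>r>0. (\<Psi> has_real_derivative \<psi> r) (at r)) \<longrightarrow> L2pistar \<beta> d v \<Psi>)
                   \<longrightarrow> (\<forall>r>0. \<psi> r = L.phi r)"
      using L.uniq by blast
    show "(L.phi \<longlongrightarrow> 0) (at_right 0)" by (rule L.phi_lim0)
    show "(L.phi \<longlongrightarrow> 0) at_top" by (rule L.phi_limtop)
  qed
qed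


end
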